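(* Let $R$ be a commutative ring with identity, $I,J$ ideals of $R$, and $M$ a progenerator $R$-module (a finitely generated projective generator of the category of $R$-modules). If $M$ is $I$-coreduced, then $M$ is $I$-reduced. If $M$ is $(I,J)$-coprime, then $M$ is $(I,J)$-prime.
   Context: All rings are commutative with identity and modules are unital. An $R$-module $M$ is $I$-reduced if for all $m\in M$, $I^2m=0$ implies $Im=0$; $I$-coreduced if $IM=I^2M$; $(I,J)$-prime if for all $m\in M$, $IJm=0$ implies $Im=0$ or $Jm=0$; $(I,J)$-coprime if $IJM=IM$ or $IJM=JM$. *)

theory Defs
  imports Complex_Main
begin

text \<open>Modules over a commutative ring R (the type 'a) are given by a scalar
multiplication scale :: 'a => 'b => 'b satisfying the locale module (HOL.Modules);
the module is the whole type 'b.\<close>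

definition is_ideal :: "'a::comm_ring_1 set \<Rightarrow> bool" where
  "is_ideal I \<longleftrightarrow> module.subspace ((*) :: 'a \<Rightarrow> 'a \<Rightarrow> 'a) I"

definition ideal_mult :: "'a::comm_ring_1 set \<Rightarrow> 'a set \<Rightarrow> 'a set" where
  "ideal_mult I J = module.span ((*) :: 'a \<Rightarrow> 'a \<Rightarrow> 'a) {a * b | a b. a \<in> I \<and> b \<in> J}"

definition ideal_smult :: "('a::comm_ring_1 \<Rightarrow> 'b::ab_group_add \<Rightarrow> 'b) \<Rightarrow> 'a set \<Rightarrow> 'b set" where
  "ideal_smult scale I = module.span scale {scale r m | r m. r \<in> I}"

definition ann_by :: "('a::comm_ring_1 \<Rightarrow> 'b::ab_group_add \<Rightarrow> 'b) \<Rightarrow> 'a set \<Rightarrow> 'b \<Rightarrow> bool" where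
  "ann_by scale I m \<longleftrightarrow> (\<forall>r\<in>I. scale r m = 0)"

definition I_reduced :: "('a::comm_ring_1 \<Rightarrow> 'b::ab_group_add \<Rightarrow> 'b) \<Rightarrow> 'a set \<Rightarrow> bool" where
  "I_reduced scale I \<longleftrightarrow>
     (\<forall>m. ann_by scale (ideal_mult I I) m \<longrightarrow> ann_by scale I m)"

definition I_coreduced :: "('a::comm_ring_1 \<Rightarrow> 'b::ab_group_add \<Rightarrow> 'b) \<Rightarrow> 'a set \<Rightarrow> bool" where
  "I_coreduced scale I \<longleftrightarrow> ideal_smult scale I = ideal_smult scale (ideal_mult I I)"

definition IJ_prime :: "('a::comm_ring_1 \<Rightarrow> 'b::ab_group_add \<Rightarrow> 'b) \<Rightarrow> 'a set \<Rightarrow> 'a set \<Rightarrow> bool" where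
  "IJ_prime scale I J \<longleftrightarrow>
     (\<forall>m. ann_by scale (ideal_mult I J) m \<longrightarrow> ann_by scale I m \<or> ann_by scale J m)"

definition IJ_coprime :: "('a::comm_ring_1 \<Rightarrow> 'b::ab_group_add \<Rightarrow> 'b) \<Rightarrow> 'a set \<Rightarrow> 'a set \<Rightarrow> bool" where
  "IJ_coprime scale I J \<longleftrightarrow>
     ideal_smult scale (ideal_mult I J) = ideal_smult scale I \<or>
     ideal_smult scale (ideal_mult I J) = ideal_smult scale J"

definition finitely_generated :: "('a::comm_ring_1 \<Rightarrow> 'b::ab_group_add \<Rightarrow> 'b) \<Rightarrow> bool" where
  "finitely_generated scale \<longleftrightarrow> (\<exists>S. finite S \<and> module.span scale S = UNIV)"

text \<open>M is (isomorphic to) a direct summand of a finitely generated free module R^n: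
  there are R-linear maps p : R^n -> M, i : M -> R^n with p o i = id. Writing
  i m = (phi_0 m, ..., phi_(n-1) m) and x_k = p(e_k) this says exactly the following.\<close>
definition summand_of_fg_free :: "('a::comm_ring_1 \<Rightarrow> 'b::ab_group_add \<Rightarrow> 'b) \<Rightarrow> bool" where
  "summand_of_fg_free scale \<longleftrightarrow>
     (\<exists>(n::nat) (x::nat \<Rightarrow> 'b) (\<phi>::nat \<Rightarrow> 'b \<Rightarrow> 'a).
        (\<forall>k<n. module_hom scale (*) (\<phi> k)) \<and>
        (\<forall>m. m = (\<Sum>k<n. scale (\<phi> k m) (x k))))"

text \<open>M is a generator: the images of all R-linear maps M -> R generate R
  (i.e. R, and hence every module, is an epimorphic image of a direct sum of copies of M).\<close>
definition is_generator :: "('a::comm_ring_1 \<Rightarrow> 'b::ab_group_add \<Rightarrow> 'b) \<Rightarrow> bool" where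
  "is_generator scale \<longleftrightarrow>
     module.span ((*) :: 'a \<Rightarrow> 'a \<Rightarrow> 'a) (\<Union>{range f | f. module_hom scale (*) f}) = UNIV"

definition progenerator :: "('a::comm_ring_1 \<Rightarrow> 'b::ab_group_add \<Rightarrow> 'b) \<Rightarrow> bool" where
  "progenerator scale \<longleftrightarrow>
     finitely_generated scale \<and> summand_of_fg_free scale \<and> is_generator scale"

end

theory Submission
  imports Defs
begin

lemma mult_module: "module ((*) :: 'a::comm_ring_1 \<Rightarrow> 'a \<Rightarrow> 'a)"
  by unfold_locales (auto simp: algebra_simps)

lemma hom_into_ideal:
  fixes scale :: "'a::comm_ring_1 \<Rightarrow> 'b::ab_group_add \<Rightarrow> 'b"
  assumes M: "module scale" and f: "module_hom scale (*) f"
    and K: "K = module.span ((*) :: 'a \<Rightarrow> 'a \<Rightarrow> 'a) S"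
    and x: "x \<in> ideal_smult scale K"
  shows "f x \<in> K"
proof -
  interpret R: module "(*) :: 'a \<Rightarrow> 'a \<Rightarrow> 'a" by (rule mult_module)
  interpret F: module_hom scale "(*)" f by (rule f)
  have sK: "R.subspace K" using K by simp
  from x[unfolded ideal_smult_def] show ?thesis
  proof (induct rule: F.m1.span_induct_alt)
    case base then show ?case by (simp add: R.subspace_0[OF sK])
  next
    case (step c x y)
    then obtain r m where rm: "x = scale r m" "r \<in> K" by blast
    have "f (scale c x + y) = c * (r * f m) + f y"
      using rm by (simp add: F.add F.scale)
    moreover have "r * f m \<in> K" using R.subspace_scale[OF sK rm(2), of "f m"]
      by (simp add: mult.commute)
    ultimately show ?case using step(2) R.subspace_scale[OF sK \<open>r * f m \<in> K\<close>, of c]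
      R.subspace_add[OF sK] by simp
  qed
qed

lemma key:
  fixes scale :: "'a::comm_ring_1 \<Rightarrow> 'b::ab_group_add \<Rightarrow> 'b"
  assumes M: "module scale" and G: "is_generator scale"
    and K: "K = module.span ((*) :: 'a \<Rightarrow> 'a \<Rightarrow> 'a) S"
    and eq: "ideal_smult scale I = ideal_smult scale K"
    and a: "a \<in> I"
  shows "a \<in> K"
proof -
  interpret R: module "(*) :: 'a \<Rightarrow> 'a \<Rightarrow> 'a" by (rule mult_module)
  have sK: "R.subspace K" using K by simp
  define T where "T = \<Union>{range f | f. module_hom scale (*) f}"
  have one: "(1::'a) \<in> R.span T"
    using G unfolding is_generator_def T_def by (metis UNIV_I)
  have gen: "a * x \<in> K" if "x \<in> T" for x
  proof -
    from that obtain f m where fm: "module_hom scale (*) f" "x = f m"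
      unfolding T_def by blast
    have "scale a m \<in> ideal_smult scale I"
      unfolding ideal_smult_def using a by (intro module.span_base[OF M]) blast
    hence "scale a m \<in> ideal_smult scale K" by (simp only: eq)
    hence "f (scale a m) \<in> K" by (rule hom_into_ideal[OF M fm(1) K])
    moreover have "f (scale a m) = a * x" using fm module_hom.scale[OF fm(1)] by metis
    ultimately show ?thesis by metis
  qed
  have all: "a * y \<in> K" if "y \<in> R.span T" for y
    using that
  proof (induct rule: R.span_induct_alt)
    case base then show ?case using R.subspace_0[OF sK] by simp
  next
    case (step c x y)
    have "c * (a * x) \<in> K" using R.subspace_scale[OF sK gen[OF step(1)]] .
    hence "c * (a * x) + a * y \<in> K" by (rule R.subspace_add[OF sK _ step(2)])
    moreover have "a * (c * x + y) = c * (a * x) + a * y" by (simp only: distrib_left mult.left_commute)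
    ultimately show ?case by (simp only:)
  qed
  show ?thesis using all[OF one] by simp
qed

theorem mainTheorem8:
  fixes scale :: "'a::comm_ring_1 \<Rightarrow> 'b::ab_group_add \<Rightarrow> 'b"
    and I J :: "'a set"
  assumes "module scale"
    and "is_ideal I" and "is_ideal J"
    and "progenerator scale"
  shows "(I_coreduced scale I \<longrightarrow> I_reduced scale I) \<and>
         (IJ_coprime scale I J \<longrightarrow> IJ_prime scale I J)"
proof -
  have G: "is_generator scale" using assms(4) unfolding progenerator_def by simp
  have sub: "\<And>A B. ideal_smult scale A = ideal_smult scale (ideal_mult A B) \<Longrightarrow> A \<subseteq> ideal_mult A B"
    using key[OF assms(1) G ideal_mult_def] by blast
  have comm: "ideal_mult J I = ideal_mult I J"
  proof -
    have "{a * b | a b. a \<in> J \<and> b \<in> I} = {a * b | a b. a \<in> I \<and> b \<in> J}"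
      using mult.commute by blast
    then show ?thesis unfolding ideal_mult_def by simp
  qed
  show ?thesis
  proof (intro conjI impI)
    assume "I_coreduced scale I"
    hence "I \<subseteq> ideal_mult I I" using sub unfolding I_coreduced_def by blast
    then show "I_reduced scale I" unfolding I_reduced_def ann_by_def by blast
  next
    assume "IJ_coprime scale I J"
    hence "I \<subseteq> ideal_mult I J \<or> J \<subseteq> ideal_mult I J"
      unfolding IJ_coprime_def using sub[of I J] sub[of J I] comm by metis
    then show "IJ_prime scale I J" unfolding IJ_prime_def ann_by_def by blast
  qed
qed

end
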